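(* Let $e_0,e$ be two distinct symbols, and let $u_1,\dots,u_k,x_1,\dots,x_k,v$ be strings in which neither $e_0$ nor $e$ occurs. Let $$w = e_0\,u_1\,e\,u_2\,e\cdots e\,u_k\,e\;e_0\;x_1\,e\,x_2\,e\cdots e\,x_k\,e\,v.$$ Then every accepting computation $\varepsilon\,\|\,w\vdash^*\varepsilon\,\|\,\varepsilon$ of the queue automaton proceeds as $$\varepsilon\,\|\,w \vdash^* u_1eu_2e\cdots u_ke\,\|\,x_1ex_2e\cdots x_kev \vdash^* u_2e\cdots u_ke\,z_1\,\|\,x_2e\cdots x_kev \vdash^* \cdots$$ $$\cdots\vdash^* u_ke\,z_1\cdots z_{k-1}\,\|\,x_kev \vdash^* z_1\cdots z_k\,\|\,v \vdash^* \varepsilon\,\|\,\varepsilon$$ for some strings $z_1,\dots,z_k$; that is, for each $i$ the computation passes through the configuration $u_{i+1}e\cdots u_ke\,z_1\cdots z_i\,\|\,x_{i+1}e\cdots x_kev$, so that each $x_i$ is consumed by the corresponding $u_i$ with resultant $z_i$.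
   Context: Strings are over a finite alphabet; $\varepsilon$ is the empty string. The queue automaton: a configuration is written $Q\,\|\,x$ ($Q$ = queue contents, $x$ = remaining input). A single step $C\vdash C'$ is one of: from $Q\,\|\,\sigma x$ (with $\sigma$ a symbol) go to $Q\sigma\,\|\,x$ ($\sigma$ pushed onto the right end of the queue), or, if $Q=\sigma Q'$, go to $Q'\,\|\,x$ (input $\sigma$ matched against the leftmost queue symbol, which is popped). $C\vdash^*C'$ means reachable in zero or more steps; a computation is such a sequence of steps. A configuration $C$ is accepted if $C\vdash^*\varepsilon\,\|\,\varepsilon$, and an accepting computation of $w$ is a computation $\varepsilon\,\|\,w\vdash^*\varepsilon\,\|\,\varepsilon$. When a computation passes through configurations $u_1u_2u_3\,\|\,x_1x_2x_3 \vdash^* u_2u_3z_1\,\|\,x_2x_3 \vdash^* u_3z_1z_2\,\|\,x_3$ we say $x_2$ is consumed by $u_2$ with resultant $z_2$. *)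

theory Defs
  imports Main
begin

text \<open>A configuration Q || x is a pair (queue contents, remaining input).\<close>
type_synonym 'a config = "'a list \<times> 'a list"

inductive qstep :: "'a config \<Rightarrow> 'a config \<Rightarrow> bool" where
  push: "qstep (Q, \<sigma> # x) (Q @ [\<sigma>], x)"
| pop:  "qstep (\<sigma> # Q, \<sigma> # x) (Q, x)"

definition accepting_computation :: "'a list \<Rightarrow> 'a config list \<Rightarrow> bool" where
  "accepting_computation w cs \<longleftrightarrow>
     cs \<noteq> [] \<and> hd cs = ([], w) \<and> last cs = ([], []) \<and>
     (\<forall>j. Suc j < length cs \<longrightarrow> qstep (cs ! j) (cs ! Suc j))"

definition blk :: "'a \<Rightarrow> 'a list list \<Rightarrow> 'a list" where
  "blk e ss = concat (map (\<lambda>s. s @ [e]) ss)"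

end

theory Submission
  imports Defs
begin

lemma L:
  assumes H1: "\<forall>j. Suc j < length cs \<longrightarrow> qstep (cs!j) (cs!Suc j)"
    and H2: "\<forall>j<length cs. count_list (fst (cs!j)) e \<le> count_list (snd (cs!j)) e"
    and H3: "\<forall>j<length cs. snd (cs!j) \<noteq> [] \<longrightarrow> Suc j < length cs"
  shows "j < length cs \<Longrightarrow> cs!j = (u @ [e] @ R, x @ [e] @ y) \<Longrightarrow> e \<notin> set u \<Longrightarrow> e \<notin> set x
    \<Longrightarrow> count_list (u @ [e] @ R) e = count_list (x @ [e] @ y) e
    \<Longrightarrow> \<exists>j' z. j' < length cs \<and> cs!j' = (R @ z, y) \<and> set z \<subseteq> set x"
proof (induction x arbitrary: j u R)
  case Nil
  have s: "Suc j < length cs" using H3 Nil by auto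
  with H1 have "qstep (cs!j) (cs!Suc j)" by auto
  then show ?case
  proof cases
    case (push Q \<sigma> x)
    with Nil have "cs!Suc j = (u@[e]@R@[e], y)" by auto
    with H2 s have "count_list (u@[e]@R@[e]) e \<le> count_list y e" by (metis fst_conv snd_conv)
    with Nil show ?thesis by simp
  next
    case (pop \<sigma> Q x)
    with Nil have "u = []"
      by (cases u) auto
    with pop Nil have "cs!Suc j = (R, y)" by auto
    with s show ?thesis by (metis append.right_neutral empty_subsetI set_empty)
  qed
next
  case (Cons a x)
  have s: "Suc j < length cs" using H3 Cons.prems by auto
  with H1 have "qstep (cs!j) (cs!Suc j)" by auto
  then show ?case
  proof cases
    case (push Q \<sigma> x')
    with Cons.prems have c: "cs!Suc j = (u@[e]@(R@[a]), x @ [e] @ y)" by auto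
    have "\<exists>j' z. j' < length cs \<and> cs!j' = ((R@[a]) @ z, y) \<and> set z \<subseteq> set x"
      apply (rule Cons.IH[OF s c])
      using Cons.prems by auto
    then obtain j' z where "j' < length cs \<and> cs!j' = ((R@[a]) @ z, y) \<and> set z \<subseteq> set x" by blast
    then show ?thesis by (intro exI[of _ j'] exI[of _ "a#z"]) auto
  next
    case (pop \<sigma> Q x')
    with Cons.prems obtain u' where u: "u = a # u'"
      by (cases u) auto
    with pop Cons.prems have c: "cs!Suc j = (u'@[e]@R, x @ [e] @ y)" by auto
    have "\<exists>j' z. j' < length cs \<and> cs!j' = (R @ z, y) \<and> set z \<subseteq> set x"
      apply (rule Cons.IH[OF s c])
      using Cons.prems u by auto
    then show ?thesis by auto
  qed
qed

lemma L0:
  assumes H1: "\<forall>j. Suc j < length cs \<longrightarrow> qstep (cs!j) (cs!Suc j)"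
    and H2: "\<forall>j<length cs. count_list (fst (cs!j)) e \<le> count_list (snd (cs!j)) e"
    and H3: "\<forall>j<length cs. snd (cs!j) \<noteq> [] \<longrightarrow> Suc j < length cs"
  shows "j < length cs \<Longrightarrow> cs!j = (e # R, x @ [e] @ y) \<Longrightarrow> e \<notin> set x
    \<Longrightarrow> count_list (e # R) e = count_list (x @ [e] @ y) e
    \<Longrightarrow> \<exists>j'. j' < length cs \<and> cs!j' = (R @ x, y)"
proof (induction x arbitrary: j R)
  case Nil
  have s: "Suc j < length cs" using H3 Nil by auto
  with H1 have "qstep (cs!j) (cs!Suc j)" by auto
  then show ?case
  proof cases
    case (push Q \<sigma> x)
    with Nil have "cs!Suc j = (e#R@[e], y)" by auto
    with H2 s have "count_list (e#R@[e]) e \<le> count_list y e" by (metis fst_conv snd_conv)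
    with Nil show ?thesis by simp
  next
    case (pop \<sigma> Q x)
    with Nil have "cs!Suc j = (R, y)" by auto
    with s show ?thesis by auto
  qed
next
  case (Cons a x)
  have s: "Suc j < length cs" using H3 Cons.prems by auto
  with H1 have "qstep (cs!j) (cs!Suc j)" by auto
  then show ?case
  proof cases
    case (push Q \<sigma> x')
    with Cons.prems have c: "cs!Suc j = (e#(R@[a]), x @ [e] @ y)" by auto
    have "\<exists>j'. j' < length cs \<and> cs!j' = ((R@[a]) @ x, y)"
      apply (rule Cons.IH[OF s c])
      using Cons.prems by auto
    then show ?thesis by auto
  next
    case (pop \<sigma> Q x')
    with Cons.prems show ?thesis by auto
  qed
qed


lemma blk_Cons: "blk e (u # ss) = u @ [e] @ blk e ss"
  by (simp add: blk_def)

lemma blk_notin: "a \<noteq> e \<Longrightarrow> \<forall>s\<in>set ss. a \<notin> set s \<Longrightarrow> a \<notin> set (blk e ss)"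
  by (auto simp: blk_def)

lemma blk_count: "\<forall>s\<in>set ss. e \<notin> set s \<Longrightarrow> count_list (blk e ss) e = length ss"
  by (induction ss) (auto simp: blk_def)

lemma countH:
  assumes H1: "\<forall>j. Suc j < length cs \<longrightarrow> qstep (cs!j) (cs!Suc j)"
    and ne: "cs \<noteq> []" and la: "last cs = ([],[])"
  shows "\<forall>j<length cs. count_list (fst (cs!j)) a \<le> count_list (snd (cs!j)) a"
proof (intro allI impI)
  fix j assume j: "j < length cs"
  then have "j \<le> length cs - 1" by simp
  then show "count_list (fst (cs!j)) a \<le> count_list (snd (cs!j)) a"
  proof (induction j rule: inc_induct)
    case base
    then show ?case using ne la by (simp add: last_conv_nth)
  next
    case (step n)
    then have "qstep (cs!n) (cs!Suc n)" using H1 by auto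
    then show ?case using step.IH by cases auto
  qed
qed

lemma inputH:
  assumes H1: "\<forall>j. Suc j < length cs \<longrightarrow> qstep (cs!j) (cs!Suc j)"
    and ne: "cs \<noteq> []" and hd: "hd cs = ([], w)"
  shows "j < length cs \<Longrightarrow> snd (cs!j) = drop j w"
proof (induction j)
  case 0
  then show ?case using ne hd by (simp add: hd_conv_nth)
next
  case (Suc j)
  then have "qstep (cs!j) (cs!Suc j)" using H1 by auto
  then have "snd (cs!Suc j) = tl (snd (cs!j))" by cases auto
  then show ?case using Suc by (simp add: drop_Suc tl_drop)
qed

lemma idxH:
  assumes H1: "\<forall>j. Suc j < length cs \<longrightarrow> qstep (cs!j) (cs!Suc j)"
    and ne: "cs \<noteq> []" and hd: "hd cs = ([], w)"
    and j: "j < length cs"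
  shows "j = length w - length (snd (cs!j))"
proof -
  have "j \<le> length w"
  proof (cases j)
    case (Suc i)
    then have "qstep (cs!i) (cs!Suc i)" using H1 j by auto
    then have "snd (cs!i) \<noteq> []" by cases auto
    moreover have "snd (cs!i) = drop i w" using inputH[OF H1 ne hd] Suc j by simp
    ultimately show ?thesis using Suc by simp
  qed simp
  then show ?thesis using inputH[OF H1 ne hd j] by simp
qed


theorem lemma2:
  fixes e0 e :: 'a and us xs :: "'a list list" and v :: "'a list"
    and k :: nat and cs :: "'a config list"
  assumes "e0 \<noteq> e"
    and "length us = k" and "length xs = k"
    and "\<forall>s \<in> set us. e0 \<notin> set s \<and> e \<notin> set s"
    and "\<forall>s \<in> set xs. e0 \<notin> set s \<and> e \<notin> set s"
    and "e0 \<notin> set v" and "e \<notin> set v"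
    and "accepting_computation ([e0] @ blk e us @ [e0] @ blk e xs @ v) cs"
  shows "\<exists>zs :: 'a list list. length zs = k \<and>
           (\<exists>js :: nat \<Rightarrow> nat.
              (\<forall>i \<le> k. js i < length cs \<and>
                 cs ! js i = (blk e (drop i us) @ concat (take i zs), blk e (drop i xs) @ v)) \<and>
              (\<forall>i < k. js i \<le> js (Suc i)))"
proof -
  define w where "w = [e0] @ blk e us @ [e0] @ blk e xs @ v"
  have ne: "cs \<noteq> []" and hd: "hd cs = ([], w)" and la: "last cs = ([],[])"
    and H1: "\<forall>j. Suc j < length cs \<longrightarrow> qstep (cs!j) (cs!Suc j)"
    using assms(8) unfolding accepting_computation_def w_def by auto
  have H3: "\<forall>j<length cs. snd (cs!j) \<noteq> [] \<longrightarrow> Suc j < length cs"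
  proof (intro allI impI)
    fix j assume j: "j < length cs" and n: "snd (cs!j) \<noteq> []"
    show "Suc j < length cs"
    proof (rule ccontr)
      assume "\<not> Suc j < length cs"
      then have "j = length cs - 1" using j by simp
      then have "cs!j = last cs" using ne by (simp add: last_conv_nth)
      then show False using n la by simp
    qed
  qed
  have H2e: "\<forall>j<length cs. count_list (fst (cs!j)) e \<le> count_list (snd (cs!j)) e"
    using countH[OF H1 ne la] .
  have H2e0: "\<forall>j<length cs. count_list (fst (cs!j)) e0 \<le> count_list (snd (cs!j)) e0"
    using countH[OF H1 ne la] .
  define js where "js i = length w - length (blk e (drop i xs) @ v)" for i
  have K: "j = js i" if "j < length cs" "snd (cs!j) = blk e (drop i xs) @ v" for j i
    using idxH[OF H1 ne hd that(1)] that(2) unfolding js_def by simp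
  have c0: "cs!0 = ([], w)" using hd ne by (simp add: hd_conv_nth)
  have s0: "Suc 0 < length cs" using H3 c0 ne unfolding w_def by auto
  with H1 have "qstep (cs!0) (cs!Suc 0)" by auto
  then have c1: "cs!Suc 0 = ([e0], blk e us @ [e0] @ blk e xs @ v)"
    using c0 unfolding w_def by cases auto
  have nU: "e0 \<notin> set (blk e us)" using blk_notin[of e0 e us] assms by auto
  have nX: "e0 \<notin> set (blk e xs)" using blk_notin[of e0 e xs] assms by auto
  have "\<exists>j'. j' < length cs \<and> cs!j' = ([] @ blk e us, blk e xs @ v)"
    apply (rule L0[OF H1 H2e0 H3 s0, of "[]" "blk e us" "blk e xs @ v"])
    using c1 nU nX assms(6) by auto
  then obtain j0 where j0: "j0 < length cs" "cs!j0 = (blk e us, blk e xs @ v)" by auto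
  have P: "i \<le> k \<Longrightarrow> \<exists>zs. length zs = i \<and> (\<forall>z\<in>set zs. e \<notin> set z) \<and>
     (\<forall>i'\<le>i. js i' < length cs \<and> cs!(js i') = (blk e (drop i' us) @ concat (take i' zs), blk e (drop i' xs) @ v))"
    for i
  proof (induction i)
    case 0
    have "j0 = js 0" using K[of j0 0] j0 by simp
    then show ?case using j0 by (intro exI[of _ "[]"]) auto
  next
    case (Suc i)
    then obtain zs where zs: "length zs = i" "\<forall>z\<in>set zs. e \<notin> set z"
      "\<forall>i'\<le>i. js i' < length cs \<and> cs!(js i') = (blk e (drop i' us) @ concat (take i' zs), blk e (drop i' xs) @ v)"
      by auto
    have ik: "i < k" using Suc by simp
    have du: "drop i us = us!i # drop (Suc i) us" using ik assms(2) by (simp add: Cons_nth_drop_Suc)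
    have dx: "drop i xs = xs!i # drop (Suc i) xs" using ik assms(3) by (simp add: Cons_nth_drop_Suc)
    have ui: "us!i \<in> set us" using ik assms(2) by simp
    have xi: "xs!i \<in> set xs" using ik assms(3) by simp
    have ci: "cs!(js i) = (us!i @ [e] @ (blk e (drop (Suc i) us) @ concat zs), xs!i @ [e] @ (blk e (drop (Suc i) xs) @ v))"
      using zs du dx by (simp add: blk_Cons)
    have cu: "count_list (blk e (drop (Suc i) us)) e = k - Suc i"
      using blk_count[of "drop (Suc i) us" e] assms(2,4) by (auto dest: in_set_dropD)
    have cx: "count_list (blk e (drop (Suc i) xs)) e = k - Suc i"
      using blk_count[of "drop (Suc i) xs" e] assms(3,5) by (auto dest: in_set_dropD)
    have cz: "e \<notin> set (concat zs)" using zs(2) by auto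
    have "\<exists>j' z. j' < length cs \<and> cs!j' = ((blk e (drop (Suc i) us) @ concat zs) @ z, blk e (drop (Suc i) xs) @ v) \<and> set z \<subseteq> set (xs!i)"
      apply (rule L[OF H1 H2e H3 _ ci])
      using zs ui xi assms cu cx cz by auto
    then obtain j' z where j': "j' < length cs" "cs!j' = ((blk e (drop (Suc i) us) @ concat zs) @ z, blk e (drop (Suc i) xs) @ v)"
      "set z \<subseteq> set (xs!i)" by blast
    have "j' = js (Suc i)" using K[of j' "Suc i"] j' by simp
    moreover have "e \<notin> set z" using j'(3) xi assms(5) by auto
    ultimately show ?case using zs j'
      apply (intro exI[of _ "zs @ [z]"])
      apply (auto simp: le_Suc_eq)
      done
  qed
  obtain zs where zs: "length zs = k"
     "\<forall>i'\<le>k. js i' < length cs \<and> cs!(js i') = (blk e (drop i' us) @ concat (take i' zs), blk e (drop i' xs) @ v)"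
    using P[of k] by auto
  have mono: "\<forall>i<k. js i \<le> js (Suc i)"
  proof (intro allI impI)
    fix i assume "i < k"
    then have "drop i xs = xs!i # drop (Suc i) xs" using assms(3) by (simp add: Cons_nth_drop_Suc)
    then show "js i \<le> js (Suc i)" unfolding js_def by (simp add: blk_Cons)
  qed
  show ?thesis using zs mono by blast
qed

end
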